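(* For $n=0,1,2,\ldots$ let $\bar H^{(2)}_n=\sum_{0<j\leqslant n}\frac{1}{(2j-1)^2}$. Then $$\sum_{k=1}^\infty\frac{\binom{2k}k\bar H^{(2)}_k}{(2k+1)16^k}=\frac{\pi^3}{648},\qquad \sum_{k=1}^\infty\frac{\binom{2k}k\bar H^{(2)}_k}{(2k+1)8^k}=\frac{\pi^3}{192\sqrt2},\qquad \sum_{k=1}^\infty\frac{\binom{2k}k\bar H^{(2)}_k}{2k+1}\left(\frac3{16}\right)^k=\frac{\pi^3}{81\sqrt3},$$ and $$\sum_{k=0}^\infty\frac{\binom{2k}k\bar H^{(2)}_k}{(2k+1)(-32)^k}=-\frac{\sqrt2}{24}\log^3 2,\qquad \sum_{k=1}^\infty\frac{\binom{2k}k\bar H^{(2)}_k}{(2k+1)(-12)^k}=-\frac{\sqrt3}{48}\log^3 3,$$ $$\sum_{k=1}^\infty\frac{\binom{2k}k\bar H^{(2)}_k}{(2k+1)(-16)^k}=-\frac13\log^3\frac{\sqrt5+1}2.$$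
   Context: $\log$ denotes the natural logarithm. Note $\bar H^{(2)}_0=0$. *)

theory Defs
  imports "HOL-Analysis.Analysis"
begin

definition Hbar2 :: "nat \<Rightarrow> real" where
  "Hbar2 n = (\<Sum>j=1..n. 1 / (2 * real j - 1)^2)"

definition cterm :: "real \<Rightarrow> nat \<Rightarrow> real" where
  "cterm x k = real ((2*k) choose k) * Hbar2 k / (2 * real k + 1) * x ^ k"

end

theory Submission
  imports Defs "HOL-Analysis.FPS_Convergence"
begin


definition cc :: "nat \<Rightarrow> real" where "cc k = real ((2*k) choose k) / 4^k"
definition bb :: "nat \<Rightarrow> real" where "bb k = cc k * Hbar2 k / (2 * real k + 1)"
definition pc :: "nat \<Rightarrow> real" where "pc k = cc k / (2 * real k + 1)"

lemma Hbar2_0 [simp]: "Hbar2 0 = 0" by (simp add: Hbar2_def)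
lemma Hbar2_Suc: "Hbar2 (Suc k) = Hbar2 k + 1 / (2 * real k + 1)^2"
  by (simp add: Hbar2_def)

lemma Hbar2_nonneg: "Hbar2 k \<ge> 0"
  unfolding Hbar2_def by (intro sum_nonneg) auto

lemma Hbar2_bound: "Hbar2 (Suc k) \<le> 2 - 1 / (real k + 1)"
proof (induction k)
  case 0 then show ?case by (simp add: Hbar2_def)
next
  case (Suc k)
  define x where "x = real k + 1"
  have k: "x \<ge> 1" by (simp add: x_def)
  have "1 / (2 * x + 1)^2 \<le> 1 / x - 1 / (x + 1)"
  proof -
    have "1 / x - 1 / (x + 1) = 1 / (x * (x + 1))" using k by (simp add: field_simps)
    moreover have "x * (x + 1) \<le> (2 * x + 1)^2" using k by (simp add: power2_eq_square algebra_simps)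
    moreover have "x * (x + 1) > 0" using k by simp
    ultimately show ?thesis by (simp add: frac_le)
  qed
  moreover have "Hbar2 (Suc (Suc k)) = Hbar2 (Suc k) + 1 / (2 * x + 1)^2"
    by (simp add: Hbar2_Suc x_def)
  ultimately show ?case using Suc by (simp add: x_def)
qed

lemma Hbar2_le2: "Hbar2 k \<le> 2"
proof (cases k)
  case (Suc m) then show ?thesis using Hbar2_bound[of m]
    by (smt (verit) divide_nonneg_nonneg of_nat_0_le_iff)
qed simp

lemma cc_nonneg: "cc k \<ge> 0" by (simp add: cc_def)
lemma cc_le1: "cc k \<le> 1"
proof -
  have "real ((2*k) choose k) \<le> 2^(2*k)" using binomial_le_pow2[of "2*k" k]
    by (metis of_nat_le_iff of_nat_numeral of_nat_power)
  also have "(2::real)^(2*k) = 4^k" by (simp add: power_mult)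
  finally show ?thesis by (simp add: cc_def)
qed

lemma aux_cc: "(y::real) \<noteq> 0 \<Longrightarrow> P \<noteq> 0 \<Longrightarrow> y * (y * B) = (2 * y) * (a * A) \<Longrightarrow> B / (4 * P) = A / P * a / (2 * y)"
  by (simp add: field_simps)

lemma aux_bb: "(a::real) \<noteq> 0 \<Longrightarrow> b \<noteq> 0 \<Longrightarrow> c \<noteq> 0 \<Longrightarrow>
   c * b * (C * a / b * (H + 1 / a^2) / c) - a^2 * (C * H / a) = C / a"
  by (simp add: field_simps power2_eq_square)

lemma aux_pc: "(a::real) \<noteq> 0 \<Longrightarrow> b \<noteq> 0 \<Longrightarrow> c \<noteq> 0 \<Longrightarrow>
   c * b * (C * a / b / c) - a^2 * (C / a) = 0"
  by (simp add: field_simps power2_eq_square)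

lemma cc_Suc: "cc (Suc k) = cc k * (2 * real k + 1) / (2 * real k + 2)"
proof -
  have e1: "Suc k * (Suc (Suc (2*k)) choose Suc k) = Suc (Suc (2*k)) * (Suc (2*k) choose k)"
    using Suc_times_binomial[of k "Suc (2*k)"] by simp
  have e2: "Suc k * (Suc (2*k) choose Suc k) = Suc (2*k) * ((2*k) choose k)"
    using Suc_times_binomial[of k "2*k"] by simp
  have e3: "(Suc (2*k) choose k) = (Suc (2*k) choose Suc k)"
    using binomial_symmetric[of k "Suc (2*k)"] by (simp add: Suc_diff_le)
  have two_suc: "2 * Suc k = Suc (Suc (2*k))" by simp
  have nat_eq: "Suc k * (Suc k * ((2 * Suc k) choose Suc k)) = Suc (Suc (2*k)) * (Suc (2*k) * ((2*k) choose k))"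
  proof -
    have "Suc k * (Suc k * ((2 * Suc k) choose Suc k)) = Suc k * (Suc (Suc (2*k)) * (Suc (2*k) choose Suc k))"
      by (simp only: two_suc e1 e3)
    also have "\<dots> = Suc (Suc (2*k)) * (Suc (2*k) * ((2*k) choose k))"
      using e2 by (metis mult.left_commute)
    finally show ?thesis .
  qed
  define B where "B = real ((2 * Suc k) choose Suc k)"
  define A where "A = real ((2*k) choose k)"
  define x where "x = real k"
  have x: "x \<ge> 0" by (simp add: x_def)
  have eq: "(x + 1) * ((x + 1) * B) = (2 * x + 2) * ((2 * x + 1) * A)"
    unfolding A_def B_def x_def using arg_cong[OF nat_eq, of real]
    by (simp only: of_nat_mult of_nat_Suc) (simp add: algebra_simps)
  have "cc (Suc k) = B / 4^(Suc k)" by (simp add: cc_def B_def)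
  moreover have "cc k = A / 4^k" by (simp add: cc_def A_def)
  moreover have "B / 4^(Suc k) = A / 4^k * (2 * x + 1) / (2 * x + 2)"
  proof -
    have "(2 * x + 2) = 2 * (x + 1)" by simp
    then show ?thesis using aux_cc[of "x+1" "4^k" B "2*x+1" A] eq x by simp
  qed
  ultimately show ?thesis by (simp add: x_def)
qed

lemma cc_0 [simp]: "cc 0 = 1" by (simp add: cc_def)

lemma bb_rec: "(2 * real k + 3) * (2 * real k + 2) * bb (Suc k) - (2 * real k + 1)^2 * bb k = pc k"
proof -
  define x where "x = real k"
  have x: "x \<ge> 0" by (simp add: x_def)
  have "bb (Suc k) = cc k * (2 * x + 1) / (2 * x + 2) * (Hbar2 k + 1 / (2 * x + 1)^2) / (2 * x + 3)"
    unfolding bb_def cc_Suc Hbar2_Suc x_def by (simp add: algebra_simps)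
  moreover have "bb k = cc k * Hbar2 k / (2 * x + 1)" unfolding bb_def x_def by simp
  moreover have "pc k = cc k / (2 * x + 1)" unfolding pc_def x_def by simp
  moreover have "(2 * x + 3) * (2 * x + 2) * (cc k * (2 * x + 1) / (2 * x + 2) * (Hbar2 k + 1 / (2 * x + 1)^2) / (2 * x + 3))
     - (2 * x + 1)^2 * (cc k * Hbar2 k / (2 * x + 1)) = cc k / (2 * x + 1)"
    by (rule aux_bb) (use x in linarith)+
  ultimately show ?thesis by (simp add: x_def)
qed

lemma pc_rec: "(2 * real k + 3) * (2 * real k + 2) * pc (Suc k) - (2 * real k + 1)^2 * pc k = 0"
proof -
  define x where "x = real k"
  have x: "x \<ge> 0" by (simp add: x_def)
  have "pc (Suc k) = cc k * (2 * x + 1) / (2 * x + 2) / (2 * x + 3)"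
    unfolding pc_def cc_Suc x_def by (simp add: algebra_simps)
  moreover have "pc k = cc k / (2 * x + 1)" unfolding pc_def x_def by simp
  moreover have "(2 * x + 3) * (2 * x + 2) * (cc k * (2 * x + 1) / (2 * x + 2) / (2 * x + 3))
     - (2 * x + 1)^2 * (cc k / (2 * x + 1)) = 0"
    by (rule aux_pc) (use x in linarith)+
  ultimately show ?thesis by (simp add: x_def)
qed



definition Qf :: "real \<Rightarrow> real fps" where
  "Qf s = Abs_fps (\<lambda>n. if odd n then s^(n div 2) * bb (n div 2) else 0)"
definition Pf :: "real \<Rightarrow> real fps" where
  "Pf s = Abs_fps (\<lambda>n. if odd n then s^(n div 2) * pc (n div 2) else 0)"
definition Lop :: "real \<Rightarrow> real fps \<Rightarrow> real fps" where
  "Lop s f = fps_deriv (fps_deriv f) - fps_const s * (fps_X^2 * fps_deriv (fps_deriv f))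
     - fps_const s * (fps_X * fps_deriv f)"

lemma Lop_nth: "fps_nth (Lop s f) n = real (n+2) * real (n+1) * fps_nth f (n+2) - s * real n ^ 2 * fps_nth f n"
proof (cases n)
  case 0 then show ?thesis by (simp add: Lop_def fps_X_power_mult_nth)
next
  case (Suc m)
  show ?thesis
  proof (cases m)
    case 0 then show ?thesis using Suc by (simp add: Lop_def fps_X_power_mult_nth)
  next
    case (Suc j)
    then show ?thesis using \<open>n = Suc m\<close>
      by (simp add: Lop_def fps_X_power_mult_nth power2_eq_square algebra_simps)
  qed
qed

lemma LQ: "Lop s (Qf s) = fps_const s * Pf s"
proof (rule fps_ext)
  fix n
  show "fps_nth (Lop s (Qf s)) n = fps_nth (fps_const s * Pf s) n"
  proof (cases "odd n")
    case True
    then obtain k where k: "n = 2 * k + 1" using oddE by blast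
    have n2: "n + 2 = 2 * Suc k + 1" using k by simp
    have "fps_nth (Lop s (Qf s)) n = real (2*k+3) * real (2*k+2) * (s^(Suc k) * bb (Suc k))
        - s * real (2*k+1)^2 * (s^k * bb k)"
      unfolding Lop_nth n2 by (simp add: Qf_def k)
    also have "\<dots> = s^(Suc k) * ((2 * real k + 3) * (2 * real k + 2) * bb (Suc k) - (2 * real k + 1)^2 * bb k)"
      by (simp add: algebra_simps)
    also have "\<dots> = s^(Suc k) * pc k" by (simp only: bb_rec)
    also have "\<dots> = fps_nth (fps_const s * Pf s) n" by (simp add: Pf_def k)
    finally show ?thesis .
  qed (simp add: Lop_nth Qf_def Pf_def)
qed

lemma LP: "Lop s (Pf s) = 0"
proof (rule fps_ext)
  fix n
  show "fps_nth (Lop s (Pf s)) n = fps_nth 0 n"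
  proof (cases "odd n")
    case True
    then obtain k where k: "n = 2 * k + 1" using oddE by blast
    have n2: "n + 2 = 2 * Suc k + 1" using k by simp
    have "fps_nth (Lop s (Pf s)) n = real (2*k+3) * real (2*k+2) * (s^(Suc k) * pc (Suc k))
        - s * real (2*k+1)^2 * (s^k * pc k)"
      unfolding Lop_nth n2 by (simp add: Pf_def k)
    also have "\<dots> = s^(Suc k) * ((2 * real k + 3) * (2 * real k + 2) * pc (Suc k) - (2 * real k + 1)^2 * pc k)"
      by (simp add: algebra_simps)
    also have "\<dots> = 0" by (simp only: pc_rec mult_zero_right)
    finally show ?thesis by simp
  qed (simp add: Lop_nth Pf_def)
qed

lemma div_le_self_aux: "(a::real) \<ge> 0 \<Longrightarrow> d \<ge> 1 \<Longrightarrow> a / d \<le> a"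
  by (simp add: divide_le_eq mult_le_cancel_left1)

lemma bb_bound: "\<bar>bb k\<bar> \<le> 2"
proof -
  have "bb k \<ge> 0" unfolding bb_def using cc_nonneg Hbar2_nonneg by simp
  moreover have "cc k * Hbar2 k \<le> 1 * 2" using cc_nonneg Hbar2_nonneg cc_le1 Hbar2_le2
    by (intro mult_mono) auto
  moreover have "cc k * Hbar2 k / (2 * real k + 1) \<le> cc k * Hbar2 k"
    using cc_nonneg Hbar2_nonneg by (intro div_le_self_aux) auto
  ultimately show ?thesis unfolding bb_def by linarith
qed

lemma pc_bound: "\<bar>pc k\<bar> \<le> 2"
proof -
  have "pc k \<ge> 0" unfolding pc_def using cc_nonneg by simp
  moreover have "cc k / (2 * real k + 1) \<le> cc k"
    using cc_nonneg by (intro div_le_self_aux) auto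
  ultimately show ?thesis unfolding pc_def using cc_le1[of k] by linarith
qed

lemma rad_bound:
  fixes f :: "real fps"
  assumes "\<And>n. \<bar>fps_nth f n\<bar> \<le> 2"
  shows "1 \<le> fps_conv_radius f"
  unfolding fps_conv_radius_def
proof (rule conv_radius_geI_ex')
  fix r :: real assume r: "0 < r" "ereal r < 1"
  then have r1: "r < 1" by simp
  show "summable (\<lambda>n. fps_nth f n * of_real r ^ n)"
  proof (rule summable_comparison_test)
    show "\<exists>N. \<forall>n\<ge>N. norm (fps_nth f n * of_real r ^ n) \<le> 2 * r ^ n"
      using assms r by (auto simp: abs_mult intro!: mult_right_mono)
    show "summable (\<lambda>n. 2 * r ^ n)"
      using r r1 by (intro summable_mult summable_geometric) auto
  qed
qed

lemma rad_Q: "\<bar>s\<bar> \<le> 1 \<Longrightarrow> 1 \<le> fps_conv_radius (Qf s)"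
proof (rule rad_bound)
  fix n assume s: "\<bar>s\<bar> \<le> 1"
  have "\<bar>s ^ (n div 2) * bb (n div 2)\<bar> \<le> 1 * 2"
    unfolding abs_mult power_abs using s bb_bound
    by (intro mult_mono) (auto intro: power_le_one)
  then show "\<bar>fps_nth (Qf s) n\<bar> \<le> 2" by (simp add: Qf_def)
qed

lemma rad_P: "\<bar>s\<bar> \<le> 1 \<Longrightarrow> 1 \<le> fps_conv_radius (Pf s)"
proof (rule rad_bound)
  fix n assume s: "\<bar>s\<bar> \<le> 1"
  have "\<bar>s ^ (n div 2) * pc (n div 2)\<bar> \<le> 1 * 2"
    unfolding abs_mult power_abs using s pc_bound
    by (intro mult_mono) (auto intro: power_le_one)
  then show "\<bar>fps_nth (Pf s) n\<bar> \<le> 2" by (simp add: Pf_def)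
qed

lemma rad_deriv: "1 \<le> fps_conv_radius (f :: real fps) \<Longrightarrow> 1 \<le> fps_conv_radius (fps_deriv f)"
  using fps_conv_radius_deriv[of f] by (meson order_trans)

lemma rad_mult: "1 \<le> fps_conv_radius (f :: real fps) \<Longrightarrow> 1 \<le> fps_conv_radius g \<Longrightarrow> 1 \<le> fps_conv_radius (f * g)"
  using fps_conv_radius_mult[of f g] by (meson min.boundedI order_trans)

lemma lt_rad: "\<bar>y :: real\<bar> < 1 \<Longrightarrow> 1 \<le> fps_conv_radius f \<Longrightarrow> norm y < fps_conv_radius f"
  by (metis ereal_less(3) less_le_trans real_norm_def)

lemma lt_rad': "\<bar>y :: real\<bar> < 1 \<Longrightarrow> 1 \<le> fps_conv_radius f \<Longrightarrow> ereal \<bar>y\<bar> < fps_conv_radius f"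
  using lt_rad by fastforce

lemma eval_Lop:
  fixes f :: "real fps"
  assumes f: "1 \<le> fps_conv_radius f" and y: "\<bar>y\<bar> < 1"
  shows "eval_fps (Lop s f) y = eval_fps (fps_deriv (fps_deriv f)) y * (1 - s * y^2)
           - s * y * eval_fps (fps_deriv f) y"
proof -
  define D1 where "D1 = fps_deriv f"
  define D2 where "D2 = fps_deriv D1"
  have r1: "1 \<le> fps_conv_radius D1" unfolding D1_def by (rule rad_deriv[OF f])
  have r2: "1 \<le> fps_conv_radius D2" unfolding D2_def by (rule rad_deriv[OF r1])
  have rX2: "1 \<le> fps_conv_radius (fps_X^2 * D2)" by (rule rad_mult) (use r2 in auto)
  have rA: "1 \<le> fps_conv_radius (fps_const s * (fps_X^2 * D2))" by (rule rad_mult) (use rX2 in auto)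
  have rX1: "1 \<le> fps_conv_radius (fps_X * D1)" by (rule rad_mult) (use r1 in auto)
  have rB: "1 \<le> fps_conv_radius (fps_const s * (fps_X * D1))" by (rule rad_mult) (use rX1 in auto)
  have rC: "1 \<le> fps_conv_radius (D2 - fps_const s * (fps_X^2 * D2))"
    using fps_conv_radius_diff[of D2 "fps_const s * (fps_X^2 * D2)"] r2 rA
    by (meson min.boundedI order_trans)
  have e1: "eval_fps (fps_const s * (fps_X^2 * D2)) y = s * (y^2 * eval_fps D2 y)"
  proof -
    have "eval_fps (fps_X^2 * D2) y = y^2 * eval_fps D2 y"
      using y r2 by (subst eval_fps_mult) (auto intro: lt_rad lt_rad')
    moreover have "eval_fps (fps_const s * (fps_X^2 * D2)) y = s * eval_fps (fps_X^2 * D2) y"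
      using y rX2 by (subst eval_fps_mult) (auto intro: lt_rad lt_rad')
    ultimately show ?thesis by simp
  qed
  have e2: "eval_fps (fps_const s * (fps_X * D1)) y = s * (y * eval_fps D1 y)"
  proof -
    have "eval_fps (fps_X * D1) y = y * eval_fps D1 y"
      using y r1 by (subst eval_fps_mult) (auto intro: lt_rad lt_rad')
    moreover have "eval_fps (fps_const s * (fps_X * D1)) y = s * eval_fps (fps_X * D1) y"
      using y rX1 by (subst eval_fps_mult) (auto intro: lt_rad lt_rad')
    ultimately show ?thesis by simp
  qed
  have h1: "eval_fps (Lop s f) y = eval_fps (D2 - fps_const s * (fps_X^2 * D2)) y - eval_fps (fps_const s * (fps_X * D1)) y"
  proof -
    have "Lop s f = (D2 - fps_const s * (fps_X^2 * D2)) - fps_const s * (fps_X * D1)"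
      by (simp add: Lop_def D2_def D1_def)
    then show ?thesis using y rC rB by (simp only:) (intro eval_fps_diff lt_rad)
  qed
  have h2: "eval_fps (D2 - fps_const s * (fps_X^2 * D2)) y = eval_fps D2 y - eval_fps (fps_const s * (fps_X^2 * D2)) y"
    using y r2 rA by (intro eval_fps_diff lt_rad)
  have Lv: "eval_fps (Lop s f) y = eval_fps D2 y - s * (y^2 * eval_fps D2 y) - s * (y * eval_fps D1 y)"
    by (simp only: h1 h2 e1 e2)
  have ar: "eval_fps D2 y * (1 - s * y^2) - s * y * eval_fps D1 y = eval_fps D2 y - s * (y^2 * eval_fps D2 y) - s * (y * eval_fps D1 y)"
    by (simp add: algebra_simps)
  show ?thesis using Lv ar unfolding D2_def D1_def by linarith
qed



lemma comp_deriv: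
  assumes "1 \<le> fps_conv_radius f" "\<bar>g t\<bar> < 1" "(g has_real_derivative g') (at t)"
  shows "((\<lambda>t. eval_fps f (g t)) has_real_derivative eval_fps (fps_deriv f) (g t) * g') (at t)"
  using DERIV_chain2[OF has_field_derivative_eval_fps[OF lt_rad[OF assms(2,1)], where A=UNIV] assms(3)]
  by simp

lemma const_zero:
  fixes u :: "real \<Rightarrow> real"
  assumes "convex A" "x \<in> A" "y \<in> A" "\<And>t. t \<in> A \<Longrightarrow> (u has_real_derivative 0) (at t)"
  shows "u x = u y"
proof -
  obtain c where "\<forall>z\<in>A. u z = c"
    using has_field_derivative_zero_constant[OF assms(1), of u] assms(4)
    by (meson has_field_derivative_at_within)
  then show ?thesis using assms(2,3) by auto
qed

lemma deriv_eq: "(f has_real_derivative D) F \<Longrightarrow> D = E \<Longrightarrow> (f has_real_derivative E) F"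
  by simp

lemma main:
  fixes s r t :: real and g h :: "real \<Rightarrow> real"
  assumes s: "\<bar>s\<bar> \<le> 1"
  and g: "\<And>t. (g has_real_derivative h t) (at t)"
  and h: "\<And>t. (h has_real_derivative (- s * g t)) (at t)"
  and hg: "\<And>t. h t ^ 2 = 1 - s * g t ^ 2"
  and g0: "g 0 = 0" and h0: "h 0 = 1"
  and bound: "\<And>t. t \<in> {-r<..<r} \<Longrightarrow> \<bar>g t\<bar> < 1"
  and t: "t \<in> {-r<..<r}"
  shows "eval_fps (Qf s) (g t) = s * t^3 / 6"
proof -
  define A where "A = {-r<..<r}"
  have cA: "convex A" unfolding A_def by simp
  have A0: "0 \<in> A" using t unfolding A_def by auto
  have tA: "t \<in> A" using t unfolding A_def by auto
  have bA: "\<And>t. t \<in> A \<Longrightarrow> \<bar>g t\<bar> < 1" using bound unfolding A_def by auto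
  define P where "P = Pf s"
  define Q where "Q = Qf s"
  define P1 where "P1 = fps_deriv P"
  define P2 where "P2 = fps_deriv P1"
  define Q1 where "Q1 = fps_deriv Q"
  define Q2 where "Q2 = fps_deriv Q1"
  have rP: "1 \<le> fps_conv_radius P" unfolding P_def using rad_P[OF s] .
  have rQ: "1 \<le> fps_conv_radius Q" unfolding Q_def using rad_Q[OF s] .
  have rP1: "1 \<le> fps_conv_radius P1" unfolding P1_def by (rule rad_deriv[OF rP])
  have rQ1: "1 \<le> fps_conv_radius Q1" unfolding Q1_def by (rule rad_deriv[OF rQ])
  have hgE: "E2 * h t * h t + E1 * (- s * g t) = E2 * (1 - s * (g t)^2) - s * g t * E1" for E1 E2 t
  proof -
    have "E2 * h t * h t + E1 * (- s * g t) = E2 * (h t)^2 + E1 * (- s * g t)"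
      by (simp add: power2_eq_square)
    also have "\<dots> = E2 * (1 - s * (g t)^2) - s * g t * E1" unfolding hg by (simp add: algebra_simps)
    finally show ?thesis .
  qed
  have LPv: "eval_fps P2 (g t) * h t * h t + eval_fps P1 (g t) * (- s * g t) = 0" if "t \<in> A" for t
  proof -
    have "eval_fps (Lop s P) (g t) = eval_fps P2 (g t) * (1 - s * (g t)^2) - s * g t * eval_fps P1 (g t)"
      unfolding P2_def P1_def by (rule eval_Lop[OF rP bA[OF that]])
    moreover have "Lop s P = 0" unfolding P_def by (rule LP)
    ultimately show ?thesis unfolding hgE by simp
  qed
  have LQv: "eval_fps Q2 (g t) * h t * h t + eval_fps Q1 (g t) * (- s * g t) = s * eval_fps P (g t)" if "t \<in> A" for t
  proof -
    have "eval_fps (Lop s Q) (g t) = eval_fps Q2 (g t) * (1 - s * (g t)^2) - s * g t * eval_fps Q1 (g t)"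
      unfolding Q2_def Q1_def by (rule eval_Lop[OF rQ bA[OF that]])
    moreover have "Lop s Q = fps_const s * P" unfolding P_def Q_def by (rule LQ)
    moreover have "eval_fps (fps_const s * P) (g t) = s * eval_fps P (g t)"
      using bA[OF that] rP by (subst eval_fps_mult) (auto intro: lt_rad lt_rad')
    ultimately show ?thesis unfolding hgE by simp
  qed
  have v: "eval_fps P1 (g x) * h x = 1" if "x \<in> A" for x
  proof -
    have "(\<lambda>x. eval_fps P1 (g x) * h x) x = (\<lambda>x. eval_fps P1 (g x) * h x) 0"
    proof (rule const_zero[OF cA that A0])
      fix t assume tA: "t \<in> A"
      show "((\<lambda>x. eval_fps P1 (g x) * h x) has_real_derivative 0) (at t)"
        by (rule deriv_eq[OF DERIV_mult[OF comp_deriv[OF rP1 bA[OF tA] g] h]])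
           (use LPv[OF tA] in \<open>simp add: P2_def\<close>)
    qed
    also have "\<dots> = 1" by (simp add: g0 h0 eval_fps_at_0 P1_def P_def Pf_def pc_def)
    finally show ?thesis by simp
  qed
  have w: "eval_fps P (g x) = x" if "x \<in> A" for x
  proof -
    have "(\<lambda>x. eval_fps P (g x) - x) x = (\<lambda>x. eval_fps P (g x) - x) 0"
    proof (rule const_zero[OF cA that A0])
      fix t assume tA: "t \<in> A"
      show "((\<lambda>x. eval_fps P (g x) - x) has_real_derivative 0) (at t)"
        by (rule deriv_eq[OF DERIV_diff[OF comp_deriv[OF rP bA[OF tA] g] DERIV_ident]])
           (use v[OF tA] in \<open>simp add: P1_def\<close>)
    qed
    also have "\<dots> = 0" by (simp add: g0 eval_fps_at_0 P_def Pf_def)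
    finally show ?thesis by simp
  qed
  have z: "eval_fps Q1 (g x) * h x = s * x^2 / 2" if "x \<in> A" for x
  proof -
    have "(\<lambda>x. eval_fps Q1 (g x) * h x - s * x^2 / 2) x = (\<lambda>x. eval_fps Q1 (g x) * h x - s * x^2 / 2) 0"
    proof (rule const_zero[OF cA that A0])
      fix t assume tA: "t \<in> A"
      have d2: "((\<lambda>x. s * x^2 / 2) has_real_derivative s * t) (at t)"
        by (auto intro!: derivative_eq_intros)
      show "((\<lambda>x. eval_fps Q1 (g x) * h x - s * x^2 / 2) has_real_derivative 0) (at t)"
        by (rule deriv_eq[OF DERIV_diff[OF DERIV_mult[OF comp_deriv[OF rQ1 bA[OF tA] g] h] d2]])
           (use LQv[OF tA] w[OF tA] in \<open>simp add: Q2_def mult.commute mult.left_commute\<close>)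
    qed
    also have "\<dots> = 0" by (simp add: g0 h0 eval_fps_at_0 Q1_def Q_def Qf_def bb_def)
    finally show ?thesis by simp
  qed
  have "(\<lambda>x. eval_fps Q (g x) - s * x^3 / 6) t = (\<lambda>x. eval_fps Q (g x) - s * x^3 / 6) 0"
  proof (rule const_zero[OF cA tA A0])
    fix t assume tA: "t \<in> A"
    have d3: "((\<lambda>x. s * x^3 / 6) has_real_derivative s * t^2 / 2) (at t)"
      by (auto intro!: derivative_eq_intros simp: power2_eq_square)
    show "((\<lambda>x. eval_fps Q (g x) - s * x^3 / 6) has_real_derivative 0) (at t)"
      by (rule deriv_eq[OF DERIV_diff[OF comp_deriv[OF rQ bA[OF tA] g] d3]])
         (use z[OF tA] in \<open>simp add: Q1_def\<close>)
  qed
  also have "\<dots> = 0" by (simp add: g0 eval_fps_at_0 Q_def Qf_def)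
  finally show ?thesis unfolding Q_def by simp
qed



lemma series:
  assumes s: "\<bar>s\<bar> \<le> 1" and y: "\<bar>y\<bar> < 1" "y \<noteq> 0"
  shows "(\<lambda>k. cterm (s * y^2 / 4) k) sums (eval_fps (Qf s) y / y)"
proof -
  have "(\<lambda>n. fps_nth (Qf s) n * y^n) sums eval_fps (Qf s) y"
    by (rule sums_eval_fps) (rule lt_rad[OF y(1) rad_Q[OF s]])
  moreover have "strict_mono (\<lambda>k::nat. 2*k+1)" by (auto simp: strict_mono_def)
  moreover have "fps_nth (Qf s) n * y^n = 0" if "n \<notin> range (\<lambda>k::nat. 2*k+1)" for n
  proof -
    have "\<not> odd n" using that oddE by (metis rangeI)
    then show ?thesis by (simp add: Qf_def)
  qed
  ultimately have "(\<lambda>k. fps_nth (Qf s) (2*k+1) * y^(2*k+1)) sums eval_fps (Qf s) y"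
    using sums_mono_reindex[of "\<lambda>k::nat. 2*k+1" "\<lambda>n. fps_nth (Qf s) n * y^n"] by simp
  then have "(\<lambda>k. fps_nth (Qf s) (2*k+1) * y^(2*k+1) / y) sums (eval_fps (Qf s) y / y)"
    by (rule sums_divide)
  moreover have "fps_nth (Qf s) (2*k+1) * y^(2*k+1) / y = cterm (s * y^2 / 4) k" for k
  proof -
    have "fps_nth (Qf s) (2*k+1) * y^(2*k+1) / y = s^k * bb k * (y^2)^k"
      using y(2) by (simp add: Qf_def power_mult)
    also have "\<dots> = cterm (s * y^2 / 4) k"
      by (simp add: cterm_def bb_def cc_def power_mult_distrib power_divide mult_ac)
    finally show ?thesis .
  qed
  ultimately show ?thesis by simp
qed

lemma cterm0: "cterm x 0 = 0" by (simp add: cterm_def)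

lemma shift1: "(\<lambda>k. cterm x k) sums v \<Longrightarrow> (\<lambda>k. cterm x (k+1)) sums v"
proof -
  assume a: "(\<lambda>k. cterm x k) sums v"
  have "(\<lambda>k. cterm x (Suc k)) sums v" using sums_Suc_iff[of "cterm x" v] a by (simp add: cterm0)
  then show ?thesis by simp
qed

lemma sin_bnd: "(x::real) \<in> {-(pi/2)<..<pi/2} \<Longrightarrow> \<bar>sin x\<bar> < 1"
proof -
  assume x: "x \<in> {-(pi/2)<..<pi/2}"
  have c: "cos x > 0" using x by (intro cos_gt_zero_pi) auto
  have "(sin x)^2 + (cos x)^2 = 1" by (rule sin_cos_squared_add)
  moreover have "(cos x)^2 > 0" using c by simp
  ultimately have "(sin x)^2 < 1" by linarith
  then show ?thesis by (simp only: abs_square_less_1)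
qed

lemma sin_inst:
  assumes t: "t \<in> {-(pi/2)<..<pi/2}" and nz: "sin t \<noteq> 0"
  shows "(\<lambda>k. cterm ((sin t)^2 / 4) k) sums (t^3 / 6 / sin t)"
proof -
  have m: "eval_fps (Qf 1) (sin t) = 1 * t^3 / 6"
  proof (rule main[where g = sin and h = cos and r = "pi/2"])
    show "(sin has_real_derivative cos x) (at x)" for x :: real by (rule DERIV_sin)
    show "(cos has_real_derivative - 1 * sin x) (at x)" for x :: real using DERIV_cos[of x] by simp
    show "(cos x)^2 = 1 - 1 * (sin x)^2" for x :: real using sin_cos_squared_add[of x] by linarith
    show "\<bar>1::real\<bar> \<le> 1" by simp
    show "sin 0 = 0" by simp
    show "cos 0 = 1" by simp
    show "\<And>x. x \<in> {-(pi/2)<..<pi/2} \<Longrightarrow> \<bar>sin x\<bar> < 1" by (rule sin_bnd)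
    show "t \<in> {-(pi/2)<..<pi/2}" by (rule t)
  qed
  have "(\<lambda>k. cterm (1 * (sin t)^2 / 4) k) sums (eval_fps (Qf 1) (sin t) / sin t)"
  proof (rule series)
    show "\<bar>1::real\<bar> \<le> 1" by simp
    show "\<bar>sin t\<bar> < 1" by (rule sin_bnd[OF t])
    show "sin t \<noteq> 0" by (rule nz)
  qed
  then show ?thesis unfolding m by simp
qed

lemma sinh_inst:
  assumes t: "\<bar>t\<bar> < ln 2" and nz: "sinh t \<noteq> 0"
  shows "(\<lambda>k. cterm ((-1) * (sinh t)^2 / 4) k) sums ((-1) * t^3 / 6 / sinh t)"
proof -
  have s2: "sinh (ln 2 :: real) = 3/4" by (simp add: sinh_ln_real)
  have bnd: "\<bar>sinh x\<bar> < 1" if "x \<in> {-(ln 2)<..<ln 2}" for x :: real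
  proof -
    have "sinh x < sinh (ln 2)" using that strict_mono_less[OF sinh_real_strict_mono] by auto
    moreover have "sinh (- ln 2) < sinh x"
      by (simp only: strict_mono_less[OF sinh_real_strict_mono]) (use that in auto)
    ultimately show ?thesis using s2 by (simp add: sinh_minus)
  qed
  have m: "eval_fps (Qf (-1)) (sinh t) = -1 * t^3 / 6"
  proof (rule main[where g = sinh and h = cosh and r = "ln 2"])
    show "\<And>x. (sinh has_real_derivative cosh x) (at x)" by (auto intro!: derivative_eq_intros)
    show "\<And>x. (cosh has_real_derivative - (-1) * sinh x) (at x)" by (auto intro!: derivative_eq_intros)
    show "(cosh x)^2 = 1 - (-1) * (sinh x)^2" for x :: real using cosh_square_eq[of x] by simp
  qed (use t bnd in auto)
  have "(\<lambda>k. cterm ((-1) * (sinh t)^2 / 4) k) sums (eval_fps (Qf (-1)) (sinh t) / sinh t)"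
  proof (rule series)
    show "\<bar>sinh t\<bar> < 1" using bnd[of t] t by (simp add: abs_less_iff)
  qed (use nz in auto)
  then show ?thesis using m by simp
qed



lemma inst1: "(\<lambda>k. cterm (1/16) (k+1)) sums (pi^3 / 648)"
proof -
  have "(\<lambda>k. cterm ((sin (pi/6))^2 / 4) k) sums ((pi/6)^3 / 6 / sin (pi/6))"
    by (rule sin_inst) (use pi_gt_zero in \<open>auto simp: sin_30\<close>)
  then have "(\<lambda>k. cterm (1/16) k) sums (pi^3 / 648)" by (simp add: sin_30 power_divide)
  then show ?thesis by (rule shift1)
qed

lemma inst2: "(\<lambda>k. cterm (1/8) (k+1)) sums (pi^3 / (192 * sqrt 2))"
proof -
  have "(\<lambda>k. cterm ((sin (pi/4))^2 / 4) k) sums ((pi/4)^3 / 6 / sin (pi/4))"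
    by (rule sin_inst) (use pi_gt_zero in \<open>auto simp: sin_45\<close>)
  moreover have "(sin (pi/4))^2 / 4 = 1/8" by (simp add: sin_45 power_divide)
  moreover have "(pi/4)^3 / 6 / sin (pi/4) = pi^3 / (192 * sqrt 2)"
    by (simp add: sin_45 power_divide field_simps)
  ultimately have "(\<lambda>k. cterm (1/8) k) sums (pi^3 / (192 * sqrt 2))" by (simp only:)
  then show ?thesis by (rule shift1)
qed

lemma inst3: "(\<lambda>k. cterm (3/16) (k+1)) sums (pi^3 / (81 * sqrt 3))"
proof -
  have "(\<lambda>k. cterm ((sin (pi/3))^2 / 4) k) sums ((pi/3)^3 / 6 / sin (pi/3))"
    proof (rule sin_inst)
    show "pi/3 \<in> {-(pi/2)<..<pi/2}" unfolding greaterThanLessThan_iff using pi_gt_zero by linarith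
  qed (simp add: sin_60)
  moreover have "(sin (pi/3))^2 / 4 = 3/16" by (simp add: sin_60 power_divide)
  moreover have "(pi/3)^3 / 6 / sin (pi/3) = pi^3 / (81 * sqrt 3)"
    by (simp add: sin_60 power_divide field_simps)
  ultimately have "(\<lambda>k. cterm (3/16) k) sums (pi^3 / (81 * sqrt 3))" by (simp only:)
  then show ?thesis by (rule shift1)
qed

lemma inst4: "(\<lambda>k. cterm (-1/32) k) sums (- (sqrt 2 / 24) * (ln 2)^3)"
proof -
  have ln2: "ln (2::real) > 0" by simp
  have t: "ln 2 / 2 = ln (sqrt (2::real))" by (simp add: ln_sqrt)
  have sh: "sinh (ln 2 / 2) = sqrt 2 / 4"
  proof -
    have "sinh (ln 2 / 2) = (sqrt 2 - inverse (sqrt 2)) / 2" unfolding t by (simp add: sinh_ln_real)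
    also have "inverse (sqrt 2) = sqrt 2 / 2" by (simp add: field_simps)
    finally show ?thesis by simp
  qed
  have "(\<lambda>k. cterm ((-1) * (sinh (ln 2 / 2))^2 / 4) k) sums ((-1) * (ln 2 / 2)^3 / 6 / sinh (ln 2 / 2))"
    by (rule sinh_inst) (use ln2 sh in auto)
  moreover have "(-1) * (sinh (ln 2 / 2))^2 / 4 = (-1/32 :: real)" by (simp add: sh power_divide)
  moreover have "(-1) * (ln 2 / 2)^3 / 6 / sinh (ln 2 / 2) = - (sqrt 2 / 24) * (ln 2)^3"
    by (simp add: sh power_divide field_simps)
  ultimately show ?thesis by (simp only:)
qed

lemma inst5: "(\<lambda>k. cterm (-1/12) (k+1)) sums (- (sqrt 3 / 48) * (ln 3)^3)"
proof -
  have ln3: "ln (3::real) > 0" by simp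
  have lt: "ln (3::real) < 2 * ln 2"
  proof -
    have "2 * ln (2::real) = ln 4" using ln_mult[of 2 2] by simp
    moreover have "ln (3::real) < ln 4" by simp
    ultimately show ?thesis by simp
  qed
  have t: "ln 3 / 2 = ln (sqrt (3::real))" by (simp add: ln_sqrt)
  have sh: "sinh (ln 3 / 2) = sqrt 3 / 3"
  proof -
    have "sinh (ln 3 / 2) = (sqrt 3 - inverse (sqrt 3)) / 2" unfolding t by (simp add: sinh_ln_real)
    also have "inverse (sqrt 3) = sqrt 3 / 3" by (simp add: field_simps)
    finally show ?thesis by simp
  qed
  have "(\<lambda>k. cterm ((-1) * (sinh (ln 3 / 2))^2 / 4) k) sums ((-1) * (ln 3 / 2)^3 / 6 / sinh (ln 3 / 2))"
    by (rule sinh_inst) (use ln3 lt sh in auto)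
  moreover have "(-1) * (sinh (ln 3 / 2))^2 / 4 = (-1/12 :: real)" by (simp add: sh power_divide)
  moreover have "(-1) * (ln 3 / 2)^3 / 6 / sinh (ln 3 / 2) = - (sqrt 3 / 48) * (ln 3)^3"
    by (simp add: sh power_divide field_simps)
  ultimately have "(\<lambda>k. cterm (-1/12) k) sums (- (sqrt 3 / 48) * (ln 3)^3)" by (simp only:)
  then show ?thesis by (rule shift1)
qed

lemma inst6: "(\<lambda>k. cterm (-1/16) (k+1)) sums (- (1/3) * (ln ((sqrt 5 + 1) / 2))^3)"
proof -
  define p :: real where "p = (sqrt 5 + 1) / 2"
  have p1: "p \<ge> 1" unfolding p_def by simp
  have s5: "sqrt 5 < (3::real)" using real_sqrt_less_mono[of 5 "3^2"] real_sqrt_abs[of 3] by simp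
  have p2: "p < 2" unfolding p_def using s5 by simp
  have ip: "inverse p = (sqrt 5 - 1) / 2"
  proof -
    have "p * ((sqrt 5 - 1) / 2) = 1" unfolding p_def by (simp add: field_simps)
    then show ?thesis using p1 by (simp add: field_simps)
  qed
  have sh: "sinh (ln p) = 1 / 2"
  proof -
    have "sinh (ln p) = (p - inverse p) / 2" using p1 by (simp add: sinh_ln_real)
    also have "\<dots> = 1 / 2" unfolding ip unfolding p_def by (simp add: field_simps)
    finally show ?thesis .
  qed
  have lp: "0 \<le> ln p" "ln p < ln 2" using p1 p2 by auto
  have "(\<lambda>k. cterm ((-1) * (sinh (ln p))^2 / 4) k) sums ((-1) * (ln p)^3 / 6 / sinh (ln p))"
    by (rule sinh_inst) (use lp sh in auto)
  moreover have "(-1) * (sinh (ln p))^2 / 4 = (-1/16 :: real)" by (simp add: sh power_divide)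
  moreover have "(-1) * (ln p)^3 / 6 / sinh (ln p) = - (1/3) * (ln p)^3"
    by (simp add: sh)
  ultimately have "(\<lambda>k. cterm (-1/16) k) sums (- (1/3) * (ln p)^3)" by (simp only:)
  then show ?thesis unfolding p_def by (rule shift1)
qed


theorem corollary1p1:
  shows "((\<lambda>k. cterm (1/16) (k+1)) sums (pi^3 / 648)) \<and>
    ((\<lambda>k. cterm (1/8) (k+1)) sums (pi^3 / (192 * sqrt 2))) \<and>
    ((\<lambda>k. cterm (3/16) (k+1)) sums (pi^3 / (81 * sqrt 3))) \<and>
    ((\<lambda>k. cterm (-1/32) k) sums (- (sqrt 2 / 24) * (ln 2)^3)) \<and>
    ((\<lambda>k. cterm (-1/12) (k+1)) sums (- (sqrt 3 / 48) * (ln 3)^3)) \<and>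
    ((\<lambda>k. cterm (-1/16) (k+1)) sums (- (1/3) * (ln ((sqrt 5 + 1) / 2))^3))"
  by (intro conjI inst1 inst2 inst3 inst4 inst5 inst6)

end
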